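(* Let $\eta_0,\eta_1,\dots$, $\mathbf{I}^\Omega$ and $\boldsymbol{\eta}^\Omega$ be as below. There exists a closed λ-term $\mathsf{Eq}$ such that for all $n\in\mathbb{N}$: $\mathsf{Eq}\,\underline{n}\,\mathbf{I}^\Omega=_\mathcal{B}\mathtt{I}$ and $\mathsf{Eq}\,\underline{n}\,\boldsymbol{\eta}^\Omega=_\mathcal{B}\eta_n$.
   Context: $\mathtt{I}=\lambda x.x$, $\Omega=(\lambda x.xx)(\lambda x.xx)$, $\underline n=\lambda fz.f^n(z)$ the Church numeral, $[M_1,\dots,M_n]=\lambda z.zM_1\cdots M_n$ ($z$ fresh), and for an effective enumeration $(M_n)_n$ (i.e. some closed $F$ has $F\underline n=_\beta M_n$) the stream $[M_n]_{n\in\mathbb{N}}$ is a λ-term with $[M_n]_{n\in\mathbb{N}}=_\beta[M_0,[M_{n+1}]_{n\in\mathbb{N}}]$. $\eta_0,\eta_1,\dots$ is an effective enumeration of closed λ-terms with $\eta_i\twoheadrightarrow_{\beta\eta}\mathtt{I}$ (finite η-expansions of the identity). $\mathbf{I}^\Omega$, $\boldsymbol{\eta}^\Omega$ are closed terms with $\mathbf{I}^\Omega yx=_\beta[y\Omega^{\sim n}x]_{n\in\mathbb{N}}$ and $\boldsymbol{\eta}^\Omega yx=_\beta[y\Omega^{\sim n}(\eta_nx)]_{n\in\mathbb{N}}$, where $y\Omega^{\sim n}$ is $y$ applied to $n$ copies of $\Omega$. $M=_\mathcal{B}N$ iff $BT(M)=BT(N)$. *)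

theory Defs
  imports Main
begin

datatype lterm = Var nat | App lterm lterm | Abs lterm

primrec lift :: "lterm \<Rightarrow> nat \<Rightarrow> lterm" where
  "lift (Var i) k = (if i < k then Var i else Var (i + 1))"
| "lift (App s t) k = App (lift s k) (lift t k)"
| "lift (Abs s) k = Abs (lift s (k + 1))"

primrec subst :: "lterm \<Rightarrow> lterm \<Rightarrow> nat \<Rightarrow> lterm" where
  "subst (Var i) s k = (if k < i then Var (i - 1) else if i = k then s else Var i)"
| "subst (App t u) s k = App (subst t s k) (subst u s k)"
| "subst (Abs t) s k = Abs (subst t (lift s 0) (k + 1))"

primrec closed_at :: "nat \<Rightarrow> lterm \<Rightarrow> bool" where
  "closed_at n (Var i) = (i < n)"
| "closed_at n (App s t) = (closed_at n s \<and> closed_at n t)"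
| "closed_at n (Abs s) = closed_at (Suc n) s"

definition closed :: "lterm \<Rightarrow> bool" where
  "closed t = closed_at 0 t"

inductive beta :: "lterm \<Rightarrow> lterm \<Rightarrow> bool" where
  beta_redex: "beta (App (Abs s) t) (subst s t 0)"
| beta_appL: "beta s s' \<Longrightarrow> beta (App s t) (App s' t)"
| beta_appR: "beta t t' \<Longrightarrow> beta (App s t) (App s t')"
| beta_abs: "beta s s' \<Longrightarrow> beta (Abs s) (Abs s')"

text \<open>One-step eta reduction: \<lambda>x. s x \<rightarrow> s, x not free in s (compatible closure).\<close>
inductive eta :: "lterm \<Rightarrow> lterm \<Rightarrow> bool" where
  eta_redex: "eta (Abs (App (lift s 0) (Var 0))) s"
| eta_appL: "eta s s' \<Longrightarrow> eta (App s t) (App s' t)"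
| eta_appR: "eta t t' \<Longrightarrow> eta (App s t) (App s t')"
| eta_abs: "eta s s' \<Longrightarrow> eta (Abs s) (Abs s')"

definition beta_eta_red :: "lterm \<Rightarrow> lterm \<Rightarrow> bool" where
  "beta_eta_red = (\<lambda>s t. beta s t \<or> eta s t)\<^sup>*\<^sup>*"

definition beta_eq :: "lterm \<Rightarrow> lterm \<Rightarrow> bool" (infix "=\<^sub>\<beta>" 50) where
  "beta_eq = equivclp beta"

definition apps :: "lterm \<Rightarrow> lterm list \<Rightarrow> lterm" where
  "apps t ts = foldl App t ts"

definition lams :: "nat \<Rightarrow> lterm \<Rightarrow> lterm" where
  "lams n t = (Abs ^^ n) t"

definition Iterm :: lterm where "Iterm = Abs (Var 0)"

definition Omega :: lterm where
  "Omega = App (Abs (App (Var 0) (Var 0))) (Abs (App (Var 0) (Var 0)))"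

definition church :: "nat \<Rightarrow> lterm" where
  "church n = Abs (Abs ((App (Var 1) ^^ n) (Var 0)))"

text \<open>Pairing [M,N] = \<lambda>z. z M N, z fresh.\<close>
definition lpair :: "lterm \<Rightarrow> lterm \<Rightarrow> lterm" where
  "lpair M N = Abs (App (App (Var 0) (lift M 0)) (lift N 0))"

definition is_stream_family :: "(nat \<Rightarrow> lterm) \<Rightarrow> (nat \<Rightarrow> lterm) \<Rightarrow> bool" where
  "is_stream_family M S = (\<forall>k. S k =\<^sub>\<beta> lpair (M k) (S (Suc k)))"

text \<open>Head normal form \<lambda>x1..xn. h P1 .. Pk, with de Bruijn head index h.\<close>
definition has_hnf :: "lterm \<Rightarrow> bool" where
  "has_hnf M = (\<exists>n h args. M =\<^sub>\<beta> lams n (apps (Var h) args))"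

definition hnf_of :: "lterm \<Rightarrow> nat \<times> nat \<times> lterm list" where
  "hnf_of M = (SOME (n, h, args). M =\<^sub>\<beta> lams n (apps (Var h) args))"

codatatype bt = Bot | Node (bt_lams: nat) (bt_head: nat) (bt_args: "bt list")

primcorec BT :: "lterm \<Rightarrow> bt" where
  "BT M = (if \<not> has_hnf M then Bot
           else Node (fst (hnf_of M)) (fst (snd (hnf_of M))) (map BT (snd (snd (hnf_of M)))))"

definition B_eq :: "lterm \<Rightarrow> lterm \<Rightarrow> bool" (infix "=\<^sub>\<B>" 50) where
  "B_eq M N = (BT M = BT N)"

end

theory Submission
  imports Defs
begin

lemma lift_lift:
    "i < k + 1 \<Longrightarrow> lift (lift t i) (Suc k) = lift (lift t k) i"
  by (induct t arbitrary: i k) auto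

lemma lift_subst [simp]:
    "j < i + 1 \<Longrightarrow> lift (subst t s j) i = subst (lift t (i + 1)) (lift s i) j"
  by (induct t arbitrary: i j s)
    (auto simp add: lift_lift split: nat.split)

lemma lift_subst_lt:
    "i < j + 1 \<Longrightarrow> lift (subst t s j) i = subst (lift t i) (lift s i) (j + 1)"
  by (induct t arbitrary: i j s) (auto simp add: lift_lift)

lemma subst_lift [simp]: "subst (lift t k) s k = t"
  by (induct t arbitrary: k s) simp_all

lemma subst_lift_var: "subst (lift t (Suc k)) (Var k) k = t"
  by (induct t arbitrary: k) auto

lemma closed_at_mono: "closed_at k t \<Longrightarrow> k \<le> j \<Longrightarrow> closed_at j t"
  by (induct t arbitrary: k j) auto

lemma lift_closed: "closed_at k t \<Longrightarrow> k \<le> j \<Longrightarrow> lift t j = t"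
  by (induct t arbitrary: k j) auto

lemma subst_closed: "closed_at k t \<Longrightarrow> k \<le> j \<Longrightarrow> subst t s j = t"
  by (induct t arbitrary: k j s) auto

lemma lift_closed0[simp]: "closed t \<Longrightarrow> lift t j = t"
  unfolding closed_def by (rule lift_closed) auto

lemma subst_closed0[simp]: "closed t \<Longrightarrow> subst t s j = t"
  unfolding closed_def by (rule subst_closed) auto

lemma beta_lift: "beta s t \<Longrightarrow> beta (lift s k) (lift t k)"
proof (induct arbitrary: k rule: beta.induct)
  case (beta_redex s t)
  then show ?case using beta.beta_redex[of "lift s (Suc k)" "lift t k"] by simp
qed (auto intro: beta.intros)

abbreviation bred (infix "\<rightarrow>\<^sub>\<beta>\<^sup>*" 50) where "bred \<equiv> beta\<^sup>*\<^sup>*"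

lemma bred_lift: "s \<rightarrow>\<^sub>\<beta>\<^sup>* t \<Longrightarrow> lift s k \<rightarrow>\<^sub>\<beta>\<^sup>* lift t k"
  by (induct rule: rtranclp_induct) (auto intro: rtranclp.rtrancl_into_rtrancl beta_lift)

lemma bred_App: "s \<rightarrow>\<^sub>\<beta>\<^sup>* s' \<Longrightarrow> t \<rightarrow>\<^sub>\<beta>\<^sup>* t' \<Longrightarrow> App s t \<rightarrow>\<^sub>\<beta>\<^sup>* App s' t'"
proof -
  assume a: "s \<rightarrow>\<^sub>\<beta>\<^sup>* s'" and b: "t \<rightarrow>\<^sub>\<beta>\<^sup>* t'"
  from a have "App s t \<rightarrow>\<^sub>\<beta>\<^sup>* App s' t"
    by (induct rule: rtranclp_induct) (auto intro: rtranclp.rtrancl_into_rtrancl beta.intros)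
  moreover from b have "App s' t \<rightarrow>\<^sub>\<beta>\<^sup>* App s' t'"
    by (induct rule: rtranclp_induct) (auto intro: rtranclp.rtrancl_into_rtrancl beta.intros)
  ultimately show ?thesis by simp
qed

lemma bred_Abs: "s \<rightarrow>\<^sub>\<beta>\<^sup>* s' \<Longrightarrow> Abs s \<rightarrow>\<^sub>\<beta>\<^sup>* Abs s'"
  by (induct rule: rtranclp_induct) (auto intro: rtranclp.rtrancl_into_rtrancl beta.intros)

inductive peta :: "lterm \<Rightarrow> lterm \<Rightarrow> bool" (infix "\<Rrightarrow>" 50) where
  pvar: "Var i \<Rrightarrow> Var i"
| papp: "s \<Rrightarrow> s' \<Longrightarrow> t \<Rrightarrow> t' \<Longrightarrow> App s t \<Rrightarrow> App s' t'"
| pabs: "s \<Rrightarrow> s' \<Longrightarrow> Abs s \<Rrightarrow> Abs s'"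
| peta: "s \<Rrightarrow> s' \<Longrightarrow> Abs (App (lift s 0) (Var 0)) \<Rrightarrow> s'"

lemma peta_refl[simp]: "t \<Rrightarrow> t"
  by (induct t) (auto intro: peta.intros)

lemma eta_peta: "eta s t \<Longrightarrow> s \<Rrightarrow> t"
  by (induct rule: eta.induct) (auto intro: peta.intros)

lemma peta_lift: "s \<Rrightarrow> t \<Longrightarrow> lift s k \<Rrightarrow> lift t k"
proof (induct arbitrary: k rule: peta.induct)
  case (peta s s')
  then show ?case using peta.peta[of "lift s k" "lift s' k"] by (simp add: lift_lift)
qed (auto intro: peta.intros)

lemma peta_subst: "s \<Rrightarrow> s' \<Longrightarrow> t \<Rrightarrow> t' \<Longrightarrow> subst s t k \<Rrightarrow> subst s' t' k"
proof (induct arbitrary: t t' k rule: peta.induct)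
  case (pvar i)
  then show ?case by (auto intro: peta.intros)
next
  case (peta s s')
  then show ?case using peta.peta[of "subst s t k" "subst s' t' k"]
    by (simp add: peta_lift lift_subst_lt)
next
  case (pabs s s')
  then show ?case by (simp add: peta.pabs peta_lift)
qed (auto intro: peta.intros peta_lift)

lemma peta_Abs_app: "s \<Rrightarrow> Abs b \<Longrightarrow> m \<Rrightarrow> n \<Longrightarrow>
   \<exists>L. App s m \<rightarrow>\<^sub>\<beta>\<^sup>* L \<and> L \<Rrightarrow> subst b n 0"
proof (induct s "Abs b" arbitrary: b rule: peta.induct)
  case (pabs s)
  then show ?case by (meson beta_redex peta_subst r_into_rtranclp)
next
  case (peta s)
  have "beta (App (Abs (App (lift s 0) (Var 0))) m) (App s m)"
    using beta.beta_redex[of "App (lift s 0) (Var 0)" m] by simp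
  moreover from peta obtain L where "App s m \<rightarrow>\<^sub>\<beta>\<^sup>* L \<and> L \<Rrightarrow> subst b n 0" by blast
  ultimately show ?case by (meson converse_rtranclp_into_rtranclp)
qed

lemma peta_beta: "m \<Rrightarrow> n \<Longrightarrow> beta n p \<Longrightarrow> \<exists>L. m \<rightarrow>\<^sub>\<beta>\<^sup>* L \<and> L \<Rrightarrow> p"
proof (induct arbitrary: p rule: peta.induct)
  case (pvar i)
  then show ?case by (auto elim: beta.cases)
next
  case (papp s s' t t')
  from papp.prems show ?case
  proof (cases rule: beta.cases)
    case (beta_redex b)
    then show ?thesis using peta_Abs_app papp by auto
  next
    case (beta_appL s'')
    then obtain L where "s \<rightarrow>\<^sub>\<beta>\<^sup>* L" "L \<Rrightarrow> s''" using papp by blast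
    then show ?thesis using papp beta_appL by (meson bred_App peta.papp rtranclp.rtrancl_refl)
  next
    case (beta_appR t'')
    then obtain L where "t \<rightarrow>\<^sub>\<beta>\<^sup>* L" "L \<Rrightarrow> t''" using papp by blast
    then show ?thesis using papp beta_appR by (meson bred_App peta.papp rtranclp.rtrancl_refl)
  qed
next
  case (pabs s s')
  from pabs.prems show ?case
  proof (cases rule: beta.cases)
    case (beta_abs s'')
    then obtain L where "s \<rightarrow>\<^sub>\<beta>\<^sup>* L" "L \<Rrightarrow> s''" using pabs by blast
    then show ?thesis using beta_abs by (meson bred_Abs peta.pabs)
  qed
next
  case (peta s s')
  then obtain L where L: "s \<rightarrow>\<^sub>\<beta>\<^sup>* L" "L \<Rrightarrow> p" by blast
  have "Abs (App (lift s 0) (Var 0)) \<rightarrow>\<^sub>\<beta>\<^sup>* Abs (App (lift L 0) (Var 0))"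
    by (intro bred_Abs bred_App bred_lift L) auto
  then show ?case using L peta.peta by blast
qed

lemma peta_bred: "n \<rightarrow>\<^sub>\<beta>\<^sup>* p \<Longrightarrow> m \<Rrightarrow> n \<Longrightarrow> \<exists>L. m \<rightarrow>\<^sub>\<beta>\<^sup>* L \<and> L \<Rrightarrow> p"
proof (induct arbitrary: m rule: converse_rtranclp_induct)
  case base
  then show ?case by blast
next
  case (step y z)
  then obtain L1 where "m \<rightarrow>\<^sub>\<beta>\<^sup>* L1" "L1 \<Rrightarrow> z" using peta_beta by blast
  then show ?case using step by (meson rtranclp_trans)
qed

lemma peta_Abs: "m \<Rrightarrow> Abs s \<Longrightarrow> \<exists>t. m = Abs t"
  by (cases rule: peta.cases) auto

lemma bered_Abs: "beta_eta_red m Iterm \<Longrightarrow> \<exists>s. m \<rightarrow>\<^sub>\<beta>\<^sup>* Abs s"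
proof -
  assume "beta_eta_red m Iterm"
  then have "(\<lambda>s t. beta s t \<or> eta s t)\<^sup>*\<^sup>* m (Abs (Var 0))" by (simp add: beta_eta_red_def Iterm_def)
  then show ?thesis
  proof (induct rule: converse_rtranclp_induct)
    case base then show ?case by blast
  next
    case (step y z)
    then obtain s where s: "z \<rightarrow>\<^sub>\<beta>\<^sup>* Abs s" by blast
    show ?case
    proof (cases "beta y z")
      case True then show ?thesis using s by (meson converse_rtranclp_into_rtranclp)
    next
      case False
      then have "y \<Rrightarrow> z" using step eta_peta by blast
      then obtain L where "y \<rightarrow>\<^sub>\<beta>\<^sup>* L" "L \<Rrightarrow> Abs s" using peta_bred s by blast
      then show ?thesis using peta_Abs by blast
    qed
  qed
qed

lemma beq_cong: assumes "\<And>x y. beta x y \<Longrightarrow> beta (f x) (f y)" and "x =\<^sub>\<beta> y" shows "f x =\<^sub>\<beta> f y"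
  using assms(2) unfolding beta_eq_def
  by (induct rule: equivclp_induct) (auto intro: equivclp_into_equivclp assms(1))

lemma beq_refl[simp]: "x =\<^sub>\<beta> x" by (simp add: beta_eq_def)
lemma beq_sym: "x =\<^sub>\<beta> y \<Longrightarrow> y =\<^sub>\<beta> x" by (simp add: beta_eq_def equivclp_sym)
lemma beq_trans [trans]: "x =\<^sub>\<beta> y \<Longrightarrow> y =\<^sub>\<beta> z \<Longrightarrow> x =\<^sub>\<beta> z"
  unfolding beta_eq_def by (rule equivclp_trans)
lemma bred_beq: "x \<rightarrow>\<^sub>\<beta>\<^sup>* y \<Longrightarrow> x =\<^sub>\<beta> y"
  unfolding beta_eq_def by (rule rtranclp_into_equivclp)
lemma beta_beq: "beta x y \<Longrightarrow> x =\<^sub>\<beta> y"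
  unfolding beta_eq_def by blast

lemma beq_AppL: "x =\<^sub>\<beta> y \<Longrightarrow> App x t =\<^sub>\<beta> App y t"
  by (rule beq_cong[where f="\<lambda>x. App x t"]) (auto intro: beta.intros)
lemma beq_AppR: "x =\<^sub>\<beta> y \<Longrightarrow> App t x =\<^sub>\<beta> App t y"
  by (rule beq_cong[where f="\<lambda>x. App t x"]) (auto intro: beta.intros)
lemma beq_Abs: "x =\<^sub>\<beta> y \<Longrightarrow> Abs x =\<^sub>\<beta> Abs y"
  by (rule beq_cong[where f="Abs"]) (auto intro: beta.intros)
lemma beq_lift: "x =\<^sub>\<beta> y \<Longrightarrow> lift x k =\<^sub>\<beta> lift y k"
  by (rule beq_cong[where f="\<lambda>x. lift x k"]) (auto intro: beta_lift)

lemma beq_BT: "M =\<^sub>\<beta> N \<Longrightarrow> BT M = BT N"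
proof -
  assume a: "M =\<^sub>\<beta> N"
  have e: "\<And>X. (M =\<^sub>\<beta> X) = (N =\<^sub>\<beta> X)"
    using a beq_sym beq_trans by blast
  have "has_hnf M = has_hnf N" unfolding has_hnf_def e ..
  moreover have "hnf_of M = hnf_of N" unfolding hnf_of_def e ..
  ultimately show ?thesis by (subst (1 2) BT.code) simp
qed

definition "Kc = Abs (Abs (Var 1))"
definition "Fc = Abs (Abs (Var 0))"
definition "Tl = Abs (App (Var 0) Fc)"
definition "Hd = Abs (App (Var 0) Kc)"
definition "Yc = Abs (App (App (Var 0) Kc) Iterm)"

lemma closed_combs[simp]: "closed Kc" "closed Fc" "closed Tl" "closed Hd" "closed Yc" "closed Iterm"
  "closed (church n)" "closed Omega"
proof -
  have "closed_at 2 ((App (Var 1) ^^ n) (Var 0))" by (induct n) auto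
  then show "closed (church n)" by (simp add: closed_def church_def numeral_2_eq_2)
qed (auto simp: closed_def Kc_def Fc_def Tl_def Hd_def Yc_def Iterm_def Omega_def)

lemma church_red: "App (App (church n) f) a \<rightarrow>\<^sub>\<beta>\<^sup>* (App f ^^ n) a"
proof -
  have 1: "subst ((App (Var (Suc 0)) ^^ n) (Var 0)) (lift f 0) (Suc 0) = (App (lift f 0) ^^ n) (Var 0)"
    by (induct n) auto
  have 2: "subst ((App (lift f 0) ^^ n) (Var 0)) a 0 = (App f ^^ n) a"
    by (induct n) auto
  have "beta (App (church n) f) (Abs ((App (lift f 0) ^^ n) (Var 0)))"
    using beta.beta_redex[of "Abs ((App (Var 1) ^^ n) (Var 0))" f] by (simp add: church_def 1)
  then have "beta (App (App (church n) f) a) (App (Abs ((App (lift f 0) ^^ n) (Var 0))) a)"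
    by (rule beta_appL)
  moreover have "beta (App (Abs ((App (lift f 0) ^^ n) (Var 0))) a) ((App f ^^ n) a)"
    using beta.beta_redex[of "(App (lift f 0) ^^ n) (Var 0)" a] by (simp add: 2)
  ultimately show ?thesis by auto
qed

lemma Tl_pair: "X =\<^sub>\<beta> lpair A B \<Longrightarrow> App Tl X =\<^sub>\<beta> B"
proof -
  assume X: "X =\<^sub>\<beta> lpair A B"
  have "App Tl X =\<^sub>\<beta> App X Fc"
    using beta_beq[OF beta.beta_redex[of "App (Var 0) Fc" X]] by (simp add: Tl_def)
  also have "App X Fc =\<^sub>\<beta> App (lpair A B) Fc" using X beq_AppL by blast
  also have "App (lpair A B) Fc =\<^sub>\<beta> App (App Fc A) B"
    using beta_beq[OF beta.beta_redex[of "App (App (Var 0) (lift A 0)) (lift B 0)" Fc]]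
    by (simp add: lpair_def)
  also have "App (App Fc A) B =\<^sub>\<beta> App (Abs (Var 0)) B"
    using beq_AppL[OF beta_beq[OF beta.beta_redex[of "Abs (Var 0)" A]]] by (simp add: Fc_def)
  also have "App (Abs (Var 0)) B =\<^sub>\<beta> B"
    using beta_beq[OF beta.beta_redex[of "Var 0" B]] by simp
  finally show ?thesis .
qed

lemma Hd_pair: "X =\<^sub>\<beta> lpair A B \<Longrightarrow> App Hd X =\<^sub>\<beta> A"
proof -
  assume X: "X =\<^sub>\<beta> lpair A B"
  have "App Hd X =\<^sub>\<beta> App X Kc"
    using beta_beq[OF beta.beta_redex[of "App (Var 0) Kc" X]] by (simp add: Hd_def)
  also have "App X Kc =\<^sub>\<beta> App (lpair A B) Kc" using X beq_AppL by blast
  also have "App (lpair A B) Kc =\<^sub>\<beta> App (App Kc A) B"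
    using beta_beq[OF beta.beta_redex[of "App (App (Var 0) (lift A 0)) (lift B 0)" Kc]]
    by (simp add: lpair_def)
  also have "App (App Kc A) B =\<^sub>\<beta> App (Abs (lift A 0)) B"
    using beq_AppL[OF beta_beq[OF beta.beta_redex[of "Abs (Var 1)" A]]] by (simp add: Kc_def)
  also have "App (Abs (lift A 0)) B =\<^sub>\<beta> A"
    using beta_beq[OF beta.beta_redex[of "lift A 0" B]] by simp
  finally show ?thesis .
qed

lemma stream_Tl: "is_stream_family M S \<Longrightarrow> (App Tl ^^ n) (S k) =\<^sub>\<beta> S (k + n)"
proof (induct n)
  case 0 then show ?case by simp
next
  case (Suc n)
  then have "App Tl ((App Tl ^^ n) (S k)) =\<^sub>\<beta> App Tl (S (k + n))" by (simp add: beq_AppR)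
  also have "S (k + n) =\<^sub>\<beta> lpair (M (k + n)) (S (Suc (k + n)))"
    using Suc.prems unfolding is_stream_family_def by simp
  then have "App Tl (S (k + n)) =\<^sub>\<beta> S (k + Suc n)"
    using Tl_pair by simp
  finally show ?case by simp
qed

lemma lams_Suc: "lams (Suc n) t = Abs (lams n t)" by (simp add: lams_def)

lemma closed_at_lams: "0 < k + n \<Longrightarrow> closed_at k (lams n (Var 0))"
  by (induct n arbitrary: k) (auto simp: lams_def)

lemma closed_lams: "closed (lams (Suc n) (Var 0))"
  unfolding closed_def lams_Suc by (simp add: closed_at_lams)

lemma Kc_iter: "(App Kc ^^ n) Iterm =\<^sub>\<beta> lams (Suc n) (Var 0)"
proof (induct n)
  case 0 then show ?case by (simp add: lams_def Iterm_def)
next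
  case (Suc n)
  then have "App Kc ((App Kc ^^ n) Iterm) =\<^sub>\<beta> App Kc (lams (Suc n) (Var 0))" by (simp add: beq_AppR)
  also have "App Kc (lams (Suc n) (Var 0)) =\<^sub>\<beta> lams (Suc (Suc n)) (Var 0)"
    using beta_beq[OF beta.beta_redex[of "Abs (Var 1)" "lams (Suc n) (Var 0)"]] lift_closed[OF closed_at_lams[of 1 n]]
    by (simp add: Kc_def lams_Suc)
  finally show ?case by simp
qed

lemma stream_Hd: "is_stream_family M S \<Longrightarrow> App Hd (S k) =\<^sub>\<beta> M k"
  unfolding is_stream_family_def using Hd_pair by blast

lemma apps_beq: "y =\<^sub>\<beta> y' \<Longrightarrow> apps y args =\<^sub>\<beta> apps y' args"
  by (induct args arbitrary: y y') (auto simp: apps_def beq_AppL)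

lemma apps_lams: "apps (lams (Suc n) (Var 0)) (replicate n Omega @ [x]) =\<^sub>\<beta> x"
proof (induct n)
  case 0
  then show ?case using beta_beq[OF beta.beta_redex[of "Var 0" x]]
    by (simp add: apps_def lams_def)
next
  case (Suc n)
  have "App (lams (Suc (Suc n)) (Var 0)) Omega =\<^sub>\<beta> lams (Suc n) (Var 0)"
    using beta_beq[OF beta.beta_redex[of "lams (Suc n) (Var 0)" Omega]] closed_lams[of n]
    by (simp add: lams_Suc[of "Suc n"])
  then have "apps (App (lams (Suc (Suc n)) (Var 0)) Omega) (replicate n Omega @ [x]) =\<^sub>\<beta>
     apps (lams (Suc n) (Var 0)) (replicate n Omega @ [x])" by (rule apps_beq)
  also have "\<dots> =\<^sub>\<beta> x" by (rule Suc)
  finally show ?case by (simp add: apps_def)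
qed

definition "Eqc = Abs (Abs (Abs (App Hd (App (App (Var 2) Tl) (App (App (Var 1) (App Yc (Var 2))) (Var 0))))))"

lemma closed_Eqc: "closed Eqc"
  unfolding Eqc_def closed_def using closed_combs unfolding closed_def
  by (auto intro: closed_at_mono)

lemma Yc_N: "App Yc (church n) =\<^sub>\<beta> lams (Suc n) (Var 0)"
proof -
  have "App Yc (church n) =\<^sub>\<beta> App (App (church n) Kc) Iterm"
    using beta_beq[OF beta.beta_redex[of "App (App (Var 0) Kc) Iterm" "church n"]] by (simp add: Yc_def)
  also have "\<dots> =\<^sub>\<beta> (App Kc ^^ n) Iterm" by (rule bred_beq[OF church_red])
  also have "\<dots> =\<^sub>\<beta> lams (Suc n) (Var 0)" by (rule Kc_iter)
  finally show ?thesis .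
qed

lemma Eqc_main:
  assumes T: "closed T"
    and spec: "\<exists>S. S 0 =\<^sub>\<beta> App (App T (App Yc (church n))) (Var 0) \<and>
        is_stream_family (\<lambda>k. apps (App Yc (church n)) (replicate k Omega @ [X k])) S"
  shows "App (App Eqc (church n)) T =\<^sub>\<beta> Abs (X n)"
proof -
  obtain S where S0: "S 0 =\<^sub>\<beta> App (App T (App Yc (church n))) (Var 0)"
    and St: "is_stream_family (\<lambda>k. apps (App Yc (church n)) (replicate k Omega @ [X k])) S"
    using spec by blast
  define body where "body = App Hd (App (App (church n) Tl) (App (App T (App Yc (church n))) (Var 0)))"
  have "App Eqc (church n) =\<^sub>\<beta> Abs (Abs (App Hd (App (App (church n) Tl) (App (App (Var 1) (App Yc (church n))) (Var 0)))))"
    using beta_beq[OF beta.beta_redex[of "Abs (Abs (App Hd (App (App (Var 2) Tl) (App (App (Var 1) (App Yc (Var 2))) (Var 0)))))" "church n"]]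
    by (simp add: Eqc_def numeral_2_eq_2)
  then have "App (App Eqc (church n)) T =\<^sub>\<beta> App (Abs (Abs (App Hd (App (App (church n) Tl) (App (App (Var 1) (App Yc (church n))) (Var 0)))))) T"
    by (rule beq_AppL)
  also have "\<dots> =\<^sub>\<beta> Abs body"
    using beta_beq[OF beta.beta_redex[of "Abs (App Hd (App (App (church n) Tl) (App (App (Var 1) (App Yc (church n))) (Var 0))))" T]] T
    by (simp add: body_def)
  also have "\<dots> =\<^sub>\<beta> Abs (X n)"
  proof (rule beq_Abs)
  have "body =\<^sub>\<beta> App Hd (App (App (church n) Tl) (S 0))"
    unfolding body_def by (intro beq_AppR beq_sym[OF S0])
  also have "\<dots> =\<^sub>\<beta> App Hd ((App Tl ^^ n) (S 0))"
    by (intro beq_AppR bred_beq church_red)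
  also have "\<dots> =\<^sub>\<beta> App Hd (S n)"
    using stream_Tl[OF St, of n 0] by (intro beq_AppR) simp
  also have "\<dots> =\<^sub>\<beta> apps (App Yc (church n)) (replicate n Omega @ [X n])"
    using stream_Hd[OF St] by simp
  also have "\<dots> =\<^sub>\<beta> apps (lams (Suc n) (Var 0)) (replicate n Omega @ [X n])"
    by (intro apps_beq Yc_N)
  also have "\<dots> =\<^sub>\<beta> X n" by (rule apps_lams)
  finally show "body =\<^sub>\<beta> X n" .
  qed
  finally show ?thesis .
qed

lemma eta_abs_beq: assumes "closed E" "beta_eta_red E Iterm"
  shows "Abs (App E (Var 0)) =\<^sub>\<beta> E"
proof -
  obtain s where s: "E \<rightarrow>\<^sub>\<beta>\<^sup>* Abs s" using bered_Abs assms(2) by blast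
  have "Abs (App E (Var 0)) = Abs (App (lift E 0) (Var 0))" using assms(1) by simp
  also have "\<dots> =\<^sub>\<beta> Abs (App (lift (Abs s) 0) (Var 0))"
    by (intro beq_Abs beq_AppL beq_lift bred_beq s)
  also have "\<dots> =\<^sub>\<beta> Abs s"
    using beta_beq[OF beta.beta_redex[of "lift s (Suc 0)" "Var 0"]]
    by (intro beq_Abs) (simp add: subst_lift_var[of s 0])
  also have "\<dots> =\<^sub>\<beta> E" using beq_sym[OF bred_beq[OF s]] .
  finally show ?thesis .
qed

theorem mainTheorem13:
  fixes etas :: "nat \<Rightarrow> lterm" and IOm etaOm :: lterm
  assumes etas_eff: "\<exists>F. closed F \<and> (\<forall>n. App F (church n) =\<^sub>\<beta> etas n)"
    and etas_closed: "\<forall>n. closed (etas n)"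
    and etas_red: "\<forall>n. beta_eta_red (etas n) Iterm"
    and IOm_closed: "closed IOm"
    and IOm_spec: "\<forall>y x. \<exists>S. S 0 =\<^sub>\<beta> App (App IOm y) x \<and>
        is_stream_family (\<lambda>n. apps y (replicate n Omega @ [x])) S"
    and etaOm_closed: "closed etaOm"
    and etaOm_spec: "\<forall>y x. \<exists>S. S 0 =\<^sub>\<beta> App (App etaOm y) x \<and>
        is_stream_family (\<lambda>n. apps y (replicate n Omega @ [App (etas n) x])) S"
  shows "\<exists>Eq. closed Eq \<and>
    (\<forall>n. App (App Eq (church n)) IOm =\<^sub>\<B> Iterm \<and>
         App (App Eq (church n)) etaOm =\<^sub>\<B> etas n)"
proof (intro exI conjI allI)
  show "closed Eqc" by (rule closed_Eqc)
  fix n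
  have "App (App Eqc (church n)) IOm =\<^sub>\<beta> Abs ((\<lambda>k. Var 0) n)"
    by (rule Eqc_main[OF IOm_closed]) (use IOm_spec in blast)
  then show "App (App Eqc (church n)) IOm =\<^sub>\<B> Iterm"
    unfolding B_eq_def Iterm_def by (intro beq_BT) simp
  have "App (App Eqc (church n)) etaOm =\<^sub>\<beta> Abs ((\<lambda>k. App (etas k) (Var 0)) n)"
    by (rule Eqc_main[OF etaOm_closed]) (use etaOm_spec in blast)
  also have "\<dots> =\<^sub>\<beta> etas n"
    using eta_abs_beq etas_closed etas_red by simp
  finally show "App (App Eqc (church n)) etaOm =\<^sub>\<B> etas n"
    unfolding B_eq_def by (rule beq_BT)
qed

end
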